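(* For all $x^0\in\mathcal{F}(\mathcal{T},\mathbb{R})$ and $x^\uparrow,x^\downarrow\in\mathcal{F}(\mathcal{T},\mathbb{R}_+)$, the following equivalences hold. (i) $x(x^0(t),x^\uparrow(t),x^\downarrow(t),\xi(t))\le\bar x$ for all $\xi\in\Xi$ and all $t\in\mathcal{T}$ if and only if $x^0_k+x^\uparrow_k\le\bar x$ for all $k\in\mathcal{K}$. (ii) $x(x^0(t),x^\uparrow(t),x^\downarrow(t),\xi(t))\ge\underline{x}$ for all $\xi\in\Xi$ and all $t\in\mathcal{T}$ if and only if $x^0_k-x^\downarrow_k\ge\underline{x}$ for all $k\in\mathcal{K}$.
   Context: Fix a positive integer $K$, $\Delta t>0$, $T=K\Delta t$, $\mathcal{T}=[0,T]$ and $\mathcal{K}=\{1,\dots,K\}$. Let $\mathcal{T}_k=[(k-1)\Delta t,k\Delta t)$ for $k<K$ and $\mathcal{T}_K=[T-\Delta t,T]$. For $U\subseteq\mathbb{R}$, $\mathcal{F}(\mathcal{T},U)$ is the set of functions $\mathcal{T}\to U$ that are constant on each $\mathcal{T}_k$, and $\mathcal{R}(\mathcal{T},U)$ is the set of Riemann integrable functions $\mathcal{T}\to U$. For $f\in\mathcal{F}(\mathcal{T},U)$, $f_k$ denotes the value of $f$ on $\mathcal{T}_k$. Write $[z]^+=\max\{z,0\}$ and $[z]^-=\max\{-z,0\}$. Let $\underline{x}\le 0\le\bar x$ and $\gamma\in[0,T]$. The power output is $x(a,b,c,s)=a+[s]^+b-[s]^-c$. The uncertainty set is $\Xi=\{\xi\in\mathcal{R}(\mathcal{T},[-1,1]):\int_{\mathcal{T}}|\xi(t)|\,dt\le\gamma\}$.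 *)

theory Defs
  imports "HOL-Analysis.Analysis"
begin

definition interval_k :: "nat \<Rightarrow> real \<Rightarrow> nat \<Rightarrow> real set" where
  "interval_k K dt k =
     (if k < K then {(real k - 1) * dt ..< real k * dt}
      else {real K * dt - dt .. real K * dt})"

text \<open>F(T,U): functions on [0,T] taking values in U that are constant on each T_k.
  Functions are modelled as real => real; only their values on [0, K dt] matter.\<close>
definition piecewise_const :: "nat \<Rightarrow> real \<Rightarrow> real set \<Rightarrow> (real \<Rightarrow> real) \<Rightarrow> bool" where
  "piecewise_const K dt U f \<longleftrightarrow>
     (\<forall>t\<in>{0 .. real K * dt}. f t \<in> U) \<and>
     (\<forall>k\<in>{1..K}. \<forall>s\<in>interval_k K dt k. \<forall>t\<in>interval_k K dt k. f s = f t)"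

definition val_k :: "real \<Rightarrow> (real \<Rightarrow> real) \<Rightarrow> nat \<Rightarrow> real" where
  "val_k dt f k = f ((real k - 1) * dt)"

definition riemann_has_integral :: "(real \<Rightarrow> real) \<Rightarrow> real set \<Rightarrow> real \<Rightarrow> bool" where
  "riemann_has_integral f S I \<longleftrightarrow>
     (\<forall>e>0. \<exists>d>0. \<forall>p. p tagged_division_of S \<and> (\<lambda>x. ball x d) fine p \<longrightarrow>
        \<bar>(\<Sum>(x,L)\<in>p. Henstock_Kurzweil_Integration.content L * f x) - I\<bar> < e)"

definition riemann_integrable :: "(real \<Rightarrow> real) \<Rightarrow> real set \<Rightarrow> bool" where
  "riemann_integrable f S \<longleftrightarrow> (\<exists>I. riemann_has_integral f S I)"

definition pos_part :: "real \<Rightarrow> real" where "pos_part z = max z 0"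
definition neg_part :: "real \<Rightarrow> real" where "neg_part z = max (- z) 0"

definition power_out :: "real \<Rightarrow> real \<Rightarrow> real \<Rightarrow> real \<Rightarrow> real" where
  "power_out a b c s = a + pos_part s * b - neg_part s * c"

definition Xi :: "real \<Rightarrow> real \<Rightarrow> (real \<Rightarrow> real) set" where
  "Xi T \<gamma> = {\<xi>. (\<forall>t\<in>{0..T}. \<xi> t \<in> {-1..1}) \<and> riemann_integrable \<xi> {0..T} \<and>
                 (\<exists>I. riemann_has_integral (\<lambda>t. \<bar>\<xi> t\<bar>) {0..T} I \<and> I \<le> \<gamma>)}"

end

theory Submission
  imports Defs
begin

hide_const (open) Polynomial.content

lemma point_int:
  fixes c :: real
  shows "riemann_has_integral (\<lambda>t. if t = c then 1 else 0) S 0"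
  unfolding riemann_has_integral_def
proof (intro allI impI)
  fix e :: real assume e: "e > 0"
  show "\<exists>d>0. \<forall>p. p tagged_division_of S \<and> (\<lambda>x. ball x d) fine p \<longrightarrow>
        \<bar>(\<Sum>(x,L)\<in>p. content L * (if x = c then 1 else 0)) - 0\<bar> < e"
  proof (intro exI[of _ "e/4"] conjI allI impI)
    show "e/4 > 0" using e by simp
    fix p assume "p tagged_division_of S \<and> (\<lambda>x. ball x (e/4)) fine p"
    then have p: "p tagged_division_of S" and fine: "(\<lambda>x. ball x (e/4)) fine p" by auto
    define q where "q = {xL \<in> p. fst xL = c}"
    have fin: "finite p" using p by auto
    have "(\<Sum>(x,L)\<in>p. content L * (if x = c then 1 else 0)) = (\<Sum>xL\<in>p. if fst xL = c then content (snd xL) else 0)"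
      by (rule sum.cong) auto
    also have "\<dots> = (\<Sum>xL\<in>q. content (snd xL))"
      unfolding q_def using sum.inter_filter[OF fin, symmetric] by simp
    also have "\<dots> = (\<Sum>(_,L)\<in>q. content L)" by (simp add: case_prod_beta)
    finally have s1: "(\<Sum>(x,L)\<in>p. content L * (if x = c then 1 else 0)) = (\<Sum>(_,L)\<in>q. content L)" .
    have qp: "q tagged_partial_division_of S"
      using tagged_partial_division_subset[of p S q] p unfolding q_def tagged_division_of_def by auto
    have qd: "q tagged_division_of \<Union>(snd ` q)" by (rule tagged_partial_division_of_Union_self[OF qp])
    have s2: "(\<Sum>(_,L)\<in>q. content L) = sum content (snd ` q)"
      by (rule sum.over_tagged_division_lemma[OF qd]) (simp add: content_eq_0_interior)
    have sub: "\<Union>(snd ` q) \<subseteq> cbox (c - e/4) (c + e/4)"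
    proof
      fix y assume "y \<in> \<Union>(snd ` q)"
      then obtain x L where "(x,L) \<in> q" "y \<in> L" by auto
      then have "x = c" "(x,L) \<in> p" unfolding q_def by auto
      then have "L \<subseteq> ball c (e/4)" using fine unfolding fine_def by auto
      then have "y \<in> ball c (e/4)" using \<open>y \<in> L\<close> by blast
      then have "\<bar>c - y\<bar> < e/4" by (simp add: dist_real_def)
      then show "y \<in> cbox (c - e/4) (c + e/4)" using abs_less_iff[of "c - y" "e/4"] by simp
    qed
    have "sum content (snd ` q) \<le> content (cbox (c - e/4) (c + e/4))"
      by (rule subadditive_content_division[OF partial_division_of_tagged_division[OF qp] sub])
    also have "\<dots> = e/2" using e by simp
    finally have le: "sum content (snd ` q) \<le> e/2" .
    have ge: "sum content (snd ` q) \<ge> 0" by (simp add: sum_nonneg)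
    show "\<bar>(\<Sum>(x,L)\<in>p. content L * (if x = c then 1 else 0)) - 0\<bar> < e"
      using s1 s2 le ge e by simp
  qed
qed

lemma neg_int:
  assumes "riemann_has_integral f S 0"
  shows "riemann_has_integral (\<lambda>t. - f t) S 0"
  using assms unfolding riemann_has_integral_def
  by (simp add: sum_negf case_prod_beta)

lemma cover:
  assumes K: "K > 0" and dt: "dt > 0" and t: "t \<in> {0 .. real K * dt}"
  shows "\<exists>k\<in>{1..K}. t \<in> interval_k K dt k"
proof (cases "t = real K * dt")
  case True
  then show ?thesis using K dt by (auto simp: interval_k_def intro!: bexI[of _ K])
next
  case False
  with t have tlt: "t < real K * dt" "0 \<le> t" by auto
  define k where "k = nat (floor (t/dt)) + 1"
  have fl0: "floor (t/dt) \<ge> 0" using tlt dt by simp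
  have "t/dt < real K" using tlt dt by (simp add: field_simps)
  then have "floor (t/dt) < int K" by linarith
  then have kK: "k \<le> K" "k \<ge> 1" unfolding k_def using fl0 by linarith+
  have rk: "real k - 1 = of_int (floor (t/dt))" unfolding k_def using fl0 by simp
  have lo: "(real k - 1) * dt \<le> t"
    using rk dt by (metis of_int_floor_le pos_le_divide_eq)
  have hi: "t < real k * dt"
  proof -
    have "t/dt < real k" using rk by linarith
    then show ?thesis using dt by (simp add: field_simps)
  qed
  have "t \<in> interval_k K dt k"
    using lo hi tlt kK unfolding interval_k_def by (auto simp: algebra_simps)
  then show ?thesis using kK by auto
qed

lemma pc_eq:
  assumes dt: "dt > 0" and pc: "piecewise_const K dt U f"
    and k: "k \<in> {1..K}" "t \<in> interval_k K dt k"
  shows "f t = val_k dt f k"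
proof -
  have "(real k - 1) * dt \<in> interval_k K dt k"
    using k dt unfolding interval_k_def by (auto simp: algebra_simps)
  then have "f t = f ((real k - 1) * dt)" using pc k unfolding piecewise_const_def by blast
  then show ?thesis unfolding val_k_def by blast
qed

lemma pc_range:
  assumes "piecewise_const K dt U f" "t \<in> {0 .. real K * dt}"
  shows "f t \<in> U"
  using assms unfolding piecewise_const_def by blast

lemma left_in:
  assumes "k \<in> {1..K}" "dt > 0"
  shows "(real k - 1) * dt \<in> {0 .. real K * dt}"
  using assms by (auto intro!: mult_right_mono)

lemma xi_in:
  assumes "c \<in> {0 .. T}" "0 \<le> \<gamma>" "v \<in> {-1, 1}"
  shows "(\<lambda>t. if t = c then v else 0) \<in> Xi T \<gamma>"
proof -
  have i1: "riemann_has_integral (\<lambda>t. if t = c then 1 else 0) {0..T} 0" by (rule point_int)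
  have i2: "riemann_has_integral (\<lambda>t. - (if t = c then 1 else 0)) {0..T} 0" by (rule neg_int[OF i1])
  have iv: "riemann_has_integral (\<lambda>t. if t = c then v else 0) {0..T} 0"
  proof (cases "v = 1")
    case True then show ?thesis using i1 by (simp only:)
  next
    case False then have "v = -1" using assms by auto
    moreover have "(\<lambda>t. - (if t = c then 1 else 0)) = (\<lambda>t. if t = c then (-1::real) else 0)" by auto
    ultimately show ?thesis using i2 by (simp only:)
  qed
  have ab: "(\<lambda>t. \<bar>if t = c then v else 0\<bar>) = (\<lambda>t. if t = c then 1 else 0)" using assms by auto
  show ?thesis unfolding Xi_def riemann_integrable_def using iv i1 assms ab by auto
qed

theorem proposition5:
  fixes K :: nat and dt xlo xhi \<gamma> :: real and x0 xup xdn :: "real \<Rightarrow> real"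
  assumes "K > 0" and "dt > 0"
    and "xlo \<le> 0" and "0 \<le> xhi"
    and "0 \<le> \<gamma>" and "\<gamma> \<le> real K * dt"
    and "piecewise_const K dt UNIV x0"
    and "piecewise_const K dt {0..} xup"
    and "piecewise_const K dt {0..} xdn"
  shows "((\<forall>\<xi>\<in>Xi (real K * dt) \<gamma>. \<forall>t\<in>{0 .. real K * dt}.
              power_out (x0 t) (xup t) (xdn t) (\<xi> t) \<le> xhi)
          \<longleftrightarrow> (\<forall>k\<in>{1..K}. val_k dt x0 k + val_k dt xup k \<le> xhi))
       \<and> ((\<forall>\<xi>\<in>Xi (real K * dt) \<gamma>. \<forall>t\<in>{0 .. real K * dt}.
              power_out (x0 t) (xup t) (xdn t) (\<xi> t) \<ge> xlo)
          \<longleftrightarrow> (\<forall>k\<in>{1..K}. val_k dt x0 k - val_k dt xdn k \<ge> xlo))"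
  proof -
  let ?T = "real K * dt"
  have vals: "x0 t = val_k dt x0 k \<and> xup t = val_k dt xup k \<and> xdn t = val_k dt xdn k"
    if "k \<in> {1..K}" "t \<in> interval_k K dt k" for t k
    using pc_eq[OF assms(2) assms(7) that] pc_eq[OF assms(2) assms(8) that]
      pc_eq[OF assms(2) assms(9) that] by blast
  have ex: "\<exists>k\<in>{1..K}. x0 t = val_k dt x0 k \<and> xup t = val_k dt xup k \<and> xdn t = val_k dt xdn k"
    if t: "t \<in> {0 .. ?T}" for t
    using cover[OF assms(1,2) t] vals by blast
  have lk: "(real k - 1) * dt \<in> interval_k K dt k" if "k \<in> {1..K}" for k
    using that assms(2) unfolding interval_k_def by (auto simp: algebra_simps)
  have pos: "xup t \<ge> 0" "xdn t \<ge> 0" if "t \<in> {0 .. ?T}" for t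
    using pc_range[OF assms(8) that] pc_range[OF assms(9) that] by auto
  have xirange: "\<xi> t \<in> {-1..1}" if "\<xi> \<in> Xi ?T \<gamma>" "t \<in> {0 .. ?T}" for \<xi> t
    using that unfolding Xi_def by blast
  have P1: "(\<forall>\<xi>\<in>Xi ?T \<gamma>. \<forall>t\<in>{0 .. ?T}. power_out (x0 t) (xup t) (xdn t) (\<xi> t) \<le> xhi)
          \<longleftrightarrow> (\<forall>k\<in>{1..K}. val_k dt x0 k + val_k dt xup k \<le> xhi)"
  proof
    assume H: "\<forall>\<xi>\<in>Xi ?T \<gamma>. \<forall>t\<in>{0 .. ?T}. power_out (x0 t) (xup t) (xdn t) (\<xi> t) \<le> xhi"
    show "\<forall>k\<in>{1..K}. val_k dt x0 k + val_k dt xup k \<le> xhi"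
    proof
      fix k assume k: "k \<in> {1..K}"
      let ?c = "(real k - 1) * dt"
      have c: "?c \<in> {0 .. ?T}" by (rule left_in[OF k assms(2)])
      have "(\<lambda>t. if t = ?c then 1 else 0) \<in> Xi ?T \<gamma>" by (rule xi_in[OF c assms(5)]) simp
      with H c have "power_out (x0 ?c) (xup ?c) (xdn ?c) 1 \<le> xhi" by fastforce
      then show "val_k dt x0 k + val_k dt xup k \<le> xhi"
        using vals[OF k lk[OF k]] by (simp add: power_out_def pos_part_def neg_part_def)
    qed
  next
    assume H: "\<forall>k\<in>{1..K}. val_k dt x0 k + val_k dt xup k \<le> xhi"
    show "\<forall>\<xi>\<in>Xi ?T \<gamma>. \<forall>t\<in>{0 .. ?T}. power_out (x0 t) (xup t) (xdn t) (\<xi> t) \<le> xhi"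
    proof (intro ballI)
      fix \<xi> t assume xi: "\<xi> \<in> Xi ?T \<gamma>" and t: "t \<in> {0 .. ?T}"
      obtain k where k: "k \<in> {1..K}" "x0 t = val_k dt x0 k" "xup t = val_k dt xup k"
        using ex[OF t] by blast
      have r: "\<xi> t \<in> {-1..1}" by (rule xirange[OF xi t])
      have "pos_part (\<xi> t) * xup t \<le> xup t"
        using r pos[OF t] by (auto simp: pos_part_def intro: mult_left_le_one_le)
      moreover have "neg_part (\<xi> t) * xdn t \<ge> 0"
        using pos[OF t] by (simp add: neg_part_def)
      ultimately show "power_out (x0 t) (xup t) (xdn t) (\<xi> t) \<le> xhi"
        using H k unfolding power_out_def by fastforce
    qed
  qed
  have P2: "(\<forall>\<xi>\<in>Xi ?T \<gamma>. \<forall>t\<in>{0 .. ?T}. power_out (x0 t) (xup t) (xdn t) (\<xi> t) \<ge> xlo)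
          \<longleftrightarrow> (\<forall>k\<in>{1..K}. val_k dt x0 k - val_k dt xdn k \<ge> xlo)"
  proof
    assume H: "\<forall>\<xi>\<in>Xi ?T \<gamma>. \<forall>t\<in>{0 .. ?T}. power_out (x0 t) (xup t) (xdn t) (\<xi> t) \<ge> xlo"
    show "\<forall>k\<in>{1..K}. val_k dt x0 k - val_k dt xdn k \<ge> xlo"
    proof
      fix k assume k: "k \<in> {1..K}"
      let ?c = "(real k - 1) * dt"
      have c: "?c \<in> {0 .. ?T}" by (rule left_in[OF k assms(2)])
      have "(\<lambda>t. if t = ?c then -1 else 0) \<in> Xi ?T \<gamma>" by (rule xi_in[OF c assms(5)]) simp
      with H c have "power_out (x0 ?c) (xup ?c) (xdn ?c) (-1) \<ge> xlo" by fastforce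
      then show "val_k dt x0 k - val_k dt xdn k \<ge> xlo"
        using vals[OF k lk[OF k]] by (simp add: power_out_def pos_part_def neg_part_def)
    qed
  next
    assume H: "\<forall>k\<in>{1..K}. val_k dt x0 k - val_k dt xdn k \<ge> xlo"
    show "\<forall>\<xi>\<in>Xi ?T \<gamma>. \<forall>t\<in>{0 .. ?T}. power_out (x0 t) (xup t) (xdn t) (\<xi> t) \<ge> xlo"
    proof (intro ballI)
      fix \<xi> t assume xi: "\<xi> \<in> Xi ?T \<gamma>" and t: "t \<in> {0 .. ?T}"
      obtain k where k: "k \<in> {1..K}" "x0 t = val_k dt x0 k" "xdn t = val_k dt xdn k"
        using ex[OF t] by blast
      have r: "\<xi> t \<in> {-1..1}" by (rule xirange[OF xi t])
      have "neg_part (\<xi> t) * xdn t \<le> xdn t"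
        using r pos[OF t] by (auto simp: neg_part_def intro: mult_left_le_one_le)
      moreover have "pos_part (\<xi> t) * xup t \<ge> 0"
        using pos[OF t] by (simp add: pos_part_def)
      ultimately show "power_out (x0 t) (xup t) (xdn t) (\<xi> t) \<ge> xlo"
        using H k unfolding power_out_def by fastforce
    qed
  qed
  show ?thesis using P1 P2 by blast
qed

end
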